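(* Fix $\varepsilon>0$ and a dataset $D=\{(x_i,y_i)\}_{i=1}^n$ with $x_i,y_i\in[0,1]$. With the noisy statistics and $\tilde n_x$ defined in the context, define $\hat S_{xy}:=\frac56\tilde S_{xy}+\frac16\bigl[\tilde n_x-(\tilde S_{(1-x)y}+\tilde S_{1-y})\bigr]$. Then $\hat S_{xy}$ is an unbiased estimator of $S_{xy}=\sum_i x_iy_i$ with variance $\mathrm{Var}(\hat S_{xy})=\frac{20}{3\varepsilon^2}$.
   Context: Let $\varepsilon_1=\varepsilon_2=\varepsilon/2$. Define the statistics $S_{x^2}=\sum_i x_i^2$, $S_{x-x^2}=\sum_i (x_i-x_i^2)$, $S_{1-x}=\sum_i(1-x_i)$, $S_{xy}=\sum_i x_iy_i$, $S_{(1-x)y}=\sum_i (1-x_i)y_i$, $S_{1-y}=\sum_i(1-y_i)$. Let $Z_{11},Z_{12},Z_{13}\stackrel{iid}{\sim}\mathrm{Lap}(1/\varepsilon_1)$ and $Z_{21},Z_{22},Z_{23}\stackrel{iid}{\sim}\mathrm{Lap}(1/\varepsilon_2)$, all six mutually independent, where $\mathrm{Lap}(b)$ is the zero-mean Laplace distribution with density $\frac{1}{2b}e^{-|z|/b}$. Set $\tilde S_{x^2}=S_{x^2}+Z_{11}$, $\tilde S_{x-x^2}=S_{x-x^2}+Z_{12}$, $\tilde S_{1-x}=S_{1-x}+Z_{13}$, $\tilde S_{xy}=S_{xy}+Z_{21}$, $\tilde S_{(1-x)y}=S_{(1-x)y}+Z_{22}$, $\tilde S_{1-y}=S_{1-y}+Z_{23}$,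 and $\tilde n_x=\tilde S_{x^2}+\tilde S_{x-x^2}+\tilde S_{1-x}$, $\tilde n_y=\tilde S_{xy}+\tilde S_{(1-x)y}+\tilde S_{1-y}$. The dataset is fixed; expectations and variances are over the noise. *)

theory Defs
  imports "HOL-Probability.Probability"
begin

definition laplace_density :: "real \<Rightarrow> real \<Rightarrow> real" where
  "laplace_density b z = exp (- \<bar>z\<bar> / b) / (2 * b)"

end

theory Submission
  imports Defs
begin

lemma exp_moment:
  assumes "0 < (l::real)"
  shows "has_bochner_integral lborel (\<lambda>x. erlang_density 0 l x * x^i) (fact i / l^i)"
proof (rule has_bochner_integral_nn_integral)
  show "(\<lambda>x. erlang_density 0 l x * x^i) \<in> borel_measurable lborel" by measurable
  show "AE x in lborel. 0 \<le> erlang_density 0 l x * x ^ i"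
    using assms by (auto simp: erlang_density_def)
  show "0 \<le> fact i / l ^ i" using assms by simp
  show "(\<integral>\<^sup>+ x. ennreal (erlang_density 0 l x * x ^ i) \<partial>lborel) = ennreal (fact i / l ^ i)"
    using nn_integral_erlang_ith_moment[OF assms, of 0 i] by simp
qed

lemma laplace_moment:
  assumes b: "0 < b" and i: "0 < i"
  shows "has_bochner_integral lborel (\<lambda>z. laplace_density b z * z^i) ((1 + (-1)^i) * fact i * b^i / 2)"
proof -
  define l where "l = 1 / b"
  have l: "0 < l" using b by (simp add: l_def)
  have h1: "has_bochner_integral lborel (\<lambda>x. erlang_density 0 l x * x^i) (fact i / l^i)"
    by (rule exp_moment[OF l])
  have h2: "has_bochner_integral lborel (\<lambda>x. erlang_density 0 l (-x) * (-x)^i) (fact i / l^i)"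
    using lborel_has_bochner_integral_real_affine_iff[where c="-1" and t=0, of "\<lambda>x. erlang_density 0 l x * x^i", THEN iffD1, OF _ h1]
    by simp
  have h3: "has_bochner_integral lborel (\<lambda>x. 1/2 * (erlang_density 0 l x * x^i) + ((-1)^i/2) * (erlang_density 0 l (-x) * (-x)^i))
      (1/2 * (fact i / l^i) + ((-1)^i/2) * (fact i / l^i))"
    by (intro has_bochner_integral_add has_bochner_integral_mult_right h1 h2)
  have eq: "(\<lambda>x. 1/2 * (erlang_density 0 l x * x^i) + ((-1)^i/2) * (erlang_density 0 l (-x) * (-x)^i))
      = (\<lambda>z. laplace_density b z * z^i)"
  proof
    fix z :: real
    have m: "(-1)^i * (-z)^i = z^i" by (simp add: power_mult_distrib[symmetric])
    show "1/2 * (erlang_density 0 l z * z^i) + ((-1)^i/2) * (erlang_density 0 l (-z) * (-z)^i) = laplace_density b z * z^i"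
    proof (cases "z < 0")
      case True
      have "((-1)^i/2) * (erlang_density 0 l (-z) * (-z)^i) = (l * exp (z * l)) / 2 * ((-1)^i * (-z)^i)"
        using True by (simp add: exponential_density_def)
      also have "\<dots> = laplace_density b z * z^i" unfolding m using True b
        by (simp add: laplace_density_def l_def)
      finally show ?thesis using True by (simp add: exponential_density_def)
    next
      case False
      show ?thesis
      proof (cases "z = 0")
        case True then show ?thesis using i by (simp add: zero_power)
      next
        case False2: False
        then show ?thesis using False b by (simp add: exponential_density_def laplace_density_def l_def)
      qed
    qed
  qed
  have val: "1/2 * (fact i / l^i) + ((-1)^i/2) * (fact i / l^i) = (1 + (-1)^i) * fact i * b^i / (2::real)"
    by (simp add: l_def field_simps power_one_over)
  show ?thesis using h3 unfolding eq val .
qed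

lemma lin_helper:
  fixes a b c d e N S z1 u1 u2 u3 v1 v2 :: real
  assumes "a + b + c = N" "d + e = N - S"
  shows "5/6*(S+z1) + 1/6*(a+u1+(b+u2)+(c+u3) - (d+v1+(e+v2))) = S + (5/6*z1 + 1/6*(u1+u2+u3-v1-v2))"
proof -
  have "d + e = a + b + c - S" using assms by simp
  then have "d = a + b + c - S - e" by simp
  then show ?thesis by (simp add: field_simps)
qed

lemma laplace_nonneg: "0 < b \<Longrightarrow> 0 \<le> laplace_density b z"
  by (simp add: laplace_density_def)

lemma (in prob_space) laplace_facts:
  assumes b: "0 < b" and D: "distributed M lborel X (\<lambda>z. ennreal (laplace_density b z))"
  shows "integrable M X" "expectation X = 0"
    "integrable M (\<lambda>\<omega>. X \<omega> ^ 2)" "expectation (\<lambda>\<omega>. X \<omega> ^ 2) = 2 * b^2"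
proof -
  have m1: "has_bochner_integral lborel (\<lambda>z. laplace_density b z * z^1) 0"
    using laplace_moment[OF b, of 1] by simp
  have m2: "has_bochner_integral lborel (\<lambda>z. laplace_density b z * z^2) (2 * b^2)"
    using laplace_moment[OF b, of 2] by simp
  have nn: "\<And>x. x \<in> space lborel \<Longrightarrow> 0 \<le> laplace_density b x" using laplace_nonneg[OF b] by simp
  have i1: "integrable M (\<lambda>x. (X x)^1)"
    using distributed_integrable[OF D, of "\<lambda>x. x^1", OF _ nn] m1 by (auto simp: has_bochner_integral_iff)
  then show "integrable M X" by simp
  have "(\<integral>x. laplace_density b x * x^1 \<partial>lborel) = (\<integral>x. (X x)^1 \<partial>M)"
    using distributed_integral[OF D, of "\<lambda>x. x^1", OF _ nn] by simp
  then show "expectation X = 0" using m1 by (simp add: has_bochner_integral_iff)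
  show "integrable M (\<lambda>\<omega>. X \<omega> ^ 2)"
    using distributed_integrable[OF D, of "\<lambda>x. x^2", OF _ nn] m2 by (auto simp: has_bochner_integral_iff)
  have "(\<integral>x. laplace_density b x * x^2 \<partial>lborel) = (\<integral>x. (X x)^2 \<partial>M)"
    using distributed_integral[OF D, of "\<lambda>x. x^2", OF _ nn] by simp
  then show "expectation (\<lambda>\<omega>. X \<omega> ^ 2) = 2 * b^2" using m2 by (simp add: has_bochner_integral_iff)
qed

lemma (in prob_space) cross0:
  fixes X :: "'i \<Rightarrow> 'a \<Rightarrow> real"
  assumes ind: "indep_vars (\<lambda>_. borel) X I" and pq: "p \<in> I" "q \<in> I" "p \<noteq> q"
    and ip: "integrable M (X p)" and iq: "integrable M (X q)" and e: "expectation (X p) = 0"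
  shows "integrable M (\<lambda>\<omega>. X p \<omega> * X q \<omega>)" "expectation (\<lambda>\<omega>. X p \<omega> * X q \<omega>) = 0"
proof -
  have ind2: "indep_vars (\<lambda>_. borel) X {p, q}"
    using indep_vars_subset[OF ind] pq by auto
  have ii: "\<And>i. i \<in> {p,q} \<Longrightarrow> integrable M (X i)" using ip iq by auto
  have pr: "\<And>\<omega>. (\<Prod>i\<in>{p,q}. X i \<omega>) = X p \<omega> * X q \<omega>" using pq by simp
  show "integrable M (\<lambda>\<omega>. X p \<omega> * X q \<omega>)"
    using indep_vars_integrable[OF _ ind2 ii] unfolding pr by simp
  have "expectation (\<lambda>\<omega>. (\<Prod>i\<in>{p,q}. X i \<omega>)) = (\<Prod>i\<in>{p,q}. expectation (X i))"
    by (rule indep_vars_lebesgue_integral[OF _ ind2 ii]) auto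
  then show "expectation (\<lambda>\<omega>. X p \<omega> * X q \<omega>) = 0" unfolding pr using pq e by simp
qed

theorem mainTheorem9:
  fixes M :: "'a measure"
    and \<epsilon> :: real
    and n :: nat
    and x y :: "nat \<Rightarrow> real"
    and Z :: "nat \<Rightarrow> nat \<Rightarrow> 'a \<Rightarrow> real"
  assumes "prob_space M"
    and eps_pos: "\<epsilon> > 0"
    and x_range: "\<And>i. i < n \<Longrightarrow> x i \<in> {0..1}"
    and y_range: "\<And>i. i < n \<Longrightarrow> y i \<in> {0..1}"
    and Z_indep: "prob_space.indep_vars M (\<lambda>_. borel) (\<lambda>(k, j). Z k j) ({1, 2} \<times> {1, 2, 3})"
    and Z1_dist: "\<And>j. j \<in> {1, 2, 3} \<Longrightarrow>
        distributed M lborel (Z 1 j) (\<lambda>z. ennreal (laplace_density (1 / (\<epsilon> / 2)) z))"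
    and Z2_dist: "\<And>j. j \<in> {1, 2, 3} \<Longrightarrow>
        distributed M lborel (Z 2 j) (\<lambda>z. ennreal (laplace_density (1 / (\<epsilon> / 2)) z))"
  shows
    "let S_x2 = (\<Sum>i<n. x i ^ 2);
         S_x_x2 = (\<Sum>i<n. x i - x i ^ 2);
         S_1_x = (\<Sum>i<n. 1 - x i);
         S_xy = (\<Sum>i<n. x i * y i);
         S_1_x_y = (\<Sum>i<n. (1 - x i) * y i);
         S_1_y = (\<Sum>i<n. 1 - y i);
         tS_x2 = (\<lambda>\<omega>. S_x2 + Z 1 1 \<omega>);
         tS_x_x2 = (\<lambda>\<omega>. S_x_x2 + Z 1 2 \<omega>);
         tS_1_x = (\<lambda>\<omega>. S_1_x + Z 1 3 \<omega>);
         tS_xy = (\<lambda>\<omega>. S_xy + Z 2 1 \<omega>);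
         tS_1_x_y = (\<lambda>\<omega>. S_1_x_y + Z 2 2 \<omega>);
         tS_1_y = (\<lambda>\<omega>. S_1_y + Z 2 3 \<omega>);
         tn_x = (\<lambda>\<omega>. tS_x2 \<omega> + tS_x_x2 \<omega> + tS_1_x \<omega>);
         hS_xy = (\<lambda>\<omega>. 5 / 6 * tS_xy \<omega> + 1 / 6 * (tn_x \<omega> - (tS_1_x_y \<omega> + tS_1_y \<omega>)))
     in prob_space.expectation M hS_xy = S_xy
        \<and> prob_space.variance M hS_xy = 20 / (3 * \<epsilon> ^ 2)"
proof -
  interpret P: prob_space M by fact
  define I :: "(nat \<times> nat) set" where "I = {1, 2} \<times> {1, 2, 3}"
  define X where "X p = Z (fst p) (snd p)" for p
  define c :: "nat \<times> nat \<Rightarrow> real" where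
    "c p = (if p = (2,1) then 5/6 else if fst p = 1 then 1/6 else -1/6)" for p
  define b :: real where "b = 1 / (\<epsilon> / 2)"
  have b: "0 < b" using eps_pos by (simp add: b_def)
  have ind: "P.indep_vars (\<lambda>_. borel) X I"
  proof -
    have "(\<lambda>(k, j). Z k j) = X" by (auto simp: X_def fun_eq_iff)
    then show ?thesis using Z_indep unfolding I_def by simp
  qed
  have D: "distributed M lborel (X p) (\<lambda>z. ennreal (laplace_density b z))" if "p \<in> I" for p
    using that Z1_dist Z2_dist unfolding I_def X_def b_def by auto
  note F = P.laplace_facts[OF b D]
  define W where "W \<omega> = (\<Sum>p\<in>I. c p * X p \<omega>)" for \<omega>
  have finI: "finite I" by (simp add: I_def)
  define Sxy where "Sxy = (\<Sum>i<n. x i * y i)"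
  have s1: "(\<Sum>i<n. x i ^ 2) + (\<Sum>i<n. x i - x i ^ 2) + (\<Sum>i<n. 1 - x i) = real n"
  proof -
    have "(\<Sum>i<n. x i ^ 2) + (\<Sum>i<n. x i - x i ^ 2) + (\<Sum>i<n. 1 - x i)
        = (\<Sum>i<n. x i ^ 2 + (x i - x i ^ 2) + (1 - x i))" by (simp only: sum.distrib)
    also have "\<dots> = (\<Sum>i<n. 1)" by simp
    finally show ?thesis by simp
  qed
  have s2: "(\<Sum>i<n. (1 - x i) * y i) + (\<Sum>i<n. 1 - y i) = real n - Sxy"
  proof -
    have "(\<Sum>i<n. (1 - x i) * y i) + (\<Sum>i<n. 1 - y i) = (\<Sum>i<n. 1 - x i * y i)"
      by (simp add: sum.distrib[symmetric] algebra_simps)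
    also have "\<dots> = real n - Sxy" by (simp add: sum_subtractf Sxy_def)
    finally show ?thesis .
  qed
  have key: "\<And>\<omega>. 5 / 6 * (Sxy + Z 2 1 \<omega>) + 1 / 6 *
      ((\<Sum>i<n. x i ^ 2) + Z 1 1 \<omega> + ((\<Sum>i<n. x i - x i ^ 2) + Z 1 2 \<omega>) + ((\<Sum>i<n. 1 - x i) + Z 1 3 \<omega>)
       - ((\<Sum>i<n. (1 - x i) * y i) + Z 2 2 \<omega> + ((\<Sum>i<n. 1 - y i) + Z 2 3 \<omega>)))
      = Sxy + W \<omega>"
  proof -
    fix \<omega>
    have w: "W \<omega> = 5/6 * Z 2 1 \<omega> + 1/6 * (Z 1 1 \<omega> + Z 1 2 \<omega> + Z 1 3 \<omega> - Z 2 2 \<omega> - Z 2 3 \<omega>)"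
      by (simp add: W_def I_def c_def X_def)
    show "?thesis \<omega>" unfolding w by (rule lin_helper[OF s1 s2])
  qed
  have intX: "integrable M (X p)" if "p \<in> I" for p using F(1)[OF that] .
  have intW: "integrable M W" unfolding W_def using intX by auto
  have EW: "P.expectation W = 0"
    unfolding W_def using intX F(2) by (simp add: Bochner_Integration.integral_sum)
  have sq: "(W \<omega>)^2 = (\<Sum>p\<in>I. \<Sum>q\<in>I. c p * c q * (X p \<omega> * X q \<omega>))" for \<omega>
    unfolding W_def power2_eq_square sum_product by (simp add: algebra_simps)
  have intPQ: "integrable M (\<lambda>\<omega>. X p \<omega> * X q \<omega>)" if "p \<in> I" "q \<in> I" for p q
  proof (cases "p = q")
    case True then show ?thesis using F(3)[OF that(1)] by (simp add: power2_eq_square)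
  next
    case False then show ?thesis using P.cross0(1)[OF ind that False intX intX F(2)] that by auto
  qed
  have EPQ: "P.expectation (\<lambda>\<omega>. X p \<omega> * X q \<omega>) = (if p = q then 2 * b^2 else 0)" if "p \<in> I" "q \<in> I" for p q
  proof (cases "p = q")
    case True then show ?thesis using F(4)[OF that(1)] by (simp add: power2_eq_square)
  next
    case False then show ?thesis using P.cross0(2)[OF ind that False intX intX F(2)] that by auto
  qed
  have EW2: "P.expectation (\<lambda>\<omega>. (W \<omega>)^2) = (\<Sum>p\<in>I. \<Sum>q\<in>I. c p * c q * (if p = q then 2 * b^2 else 0))"
    unfolding sq using intPQ EPQ by (simp add: Bochner_Integration.integral_sum)
  also have "\<dots> = 20 / (3 * \<epsilon> ^ 2)"
    using eps_pos by (simp add: I_def c_def b_def field_simps power2_eq_square)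
  finally have EW2': "P.expectation (\<lambda>\<omega>. (W \<omega>)^2) = 20 / (3 * \<epsilon> ^ 2)" .
  have E: "P.expectation (\<lambda>\<omega>. Sxy + W \<omega>) = Sxy"
    using intW EW P.prob_space by simp
  show ?thesis unfolding Let_def unfolding Sxy_def[symmetric] unfolding key
    using E EW2' by simp
qed

end
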